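(* Let $\Gamma$ be a group, $\alpha\in\mathrm{Aut}(\Gamma)$ and $\omega(g,h)=\alpha(g)$. Viewing elements $a\in K(\omega)$ as maps $\mathbb Q_2\to\Gamma$ via $a(x):=\alpha^{|u|}(a(u))$ for $x=u00\cdots$, for all $v\in V$, $a\in K(\omega)$ and $x\in\mathbb Q_2$ we have $$\pi(v)(a)(x)=\alpha^{-\log_2(v'(v^{-1}x))}\big(a(v^{-1}x)\big).$$
   Context: $\{0,1\}^*$ denotes the finite words over $\{0,1\}$ (including the empty word), $|u|$ the length; $\mathfrak C=\{0,1\}^{\mathbb N}$; $\mathbb Q_2\subset\mathfrak C$ is the set of eventually-zero sequences $u00\cdots$ ($u\in\{0,1\}^*$). The value $\alpha^{|u|}(a(u))$ does not depend on the choice of $u$ with $x=u00\cdots$, and $a\mapsto(x\mapsto a(x))$ is an isomorphism $K(\omega)\to\prod_{\mathbb Q_2}\Gamma$. A finite complete prefix code is a finite set $\{t_1,\dots,t_n\}\subset\{0,1\}^*$ such that every $x\in\mathfrak C$ has exactly one $t_i$ as prefix. Thompson's group $V$ is the group of homeomorphisms $v$ of $\mathfrak C$ for which there exist finite complete prefix codes $\{t_i\},\{s_i\}$ and a permutation $\sigma$ with $v(t_iw)=s_{\sigma(i)}w$ for all $i$, $w\in\mathfrak C$; for such a representation and $y\in\mathfrak C$ with prefix $t_i$, the slope is $v'(y):=2^{|t_i|-|s_{\sigma(i)}|}$. $K(\omega)$ is the group of maps $a:\{0,1\}^*\to\Gamma$ with $a(u)=\omega(a(u0),a(u1))$, and $V$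 acts on it by $\pi(v)(a)(s_{\sigma(i)}u)=a(t_iu)$ for all $i$, $u\in\{0,1\}^*$ (this determines $\pi(v)(a)\in K(\omega)$ uniquely). *)

theory Defs
  imports "HOL-Analysis.Analysis" "HOL-Algebra.Group"
begin

text \<open>Finite words over {0,1} are bool lists (False = 0, True = 1);
  the Cantor space is nat => bool with the product (of discrete) topology.\<close>

definition conc :: "bool list \<Rightarrow> (nat \<Rightarrow> bool) \<Rightarrow> (nat \<Rightarrow> bool)" where
  "conc u w = (\<lambda>n. if n < length u then u ! n else w (n - length u))"

definition is_prefix_of :: "bool list \<Rightarrow> (nat \<Rightarrow> bool) \<Rightarrow> bool" where
  "is_prefix_of u x \<longleftrightarrow> (\<forall>i < length u. x i = u ! i)"

definition zeros :: "nat \<Rightarrow> bool" where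
  "zeros = (\<lambda>_. False)"

definition Q2 :: "(nat \<Rightarrow> bool) set" where
  "Q2 = {x. \<exists>u. x = conc u zeros}"

definition complete_prefix_code :: "bool list set \<Rightarrow> bool" where
  "complete_prefix_code T \<longleftrightarrow> finite T \<and> (\<forall>x. \<exists>!t. t \<in> T \<and> is_prefix_of t x)"

text \<open>A representation of v: codes T, S and a bijection f : T -> S
  (playing the role of t_i |-> s_sigma(i)).\<close>
definition is_rep :: "((nat \<Rightarrow> bool) \<Rightarrow> (nat \<Rightarrow> bool)) \<Rightarrow> bool list set \<Rightarrow> bool list set
    \<Rightarrow> (bool list \<Rightarrow> bool list) \<Rightarrow> bool" where
  "is_rep v T S f \<longleftrightarrow> complete_prefix_code T \<and> complete_prefix_code S \<and> bij_betw f T S \<and>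
     (\<forall>t\<in>T. \<forall>w. v (conc t w) = conc (f t) w)"

definition thompsonV :: "((nat \<Rightarrow> bool) \<Rightarrow> (nat \<Rightarrow> bool)) set" where
  "thompsonV = {v. (\<exists>w. homeomorphism UNIV UNIV v w) \<and> (\<exists>T S f. is_rep v T S f)}"

definition slope :: "bool list set \<Rightarrow> (bool list \<Rightarrow> bool list) \<Rightarrow> (nat \<Rightarrow> bool) \<Rightarrow> real" where
  "slope T f y = (let t = (THE t. t \<in> T \<and> is_prefix_of t y)
                  in 2 powr (real (length t) - real (length (f t))))"

definition K :: "('g, 'b) monoid_scheme \<Rightarrow> ('g \<Rightarrow> 'g \<Rightarrow> 'g) \<Rightarrow> (bool list \<Rightarrow> 'g) set" where
  "K G \<omega> = {a. (\<forall>u. a u \<in> carrier G) \<and> (\<forall>u. a u = \<omega> (a (u @ [False])) (a (u @ [True])))}"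

definition autpow :: "('g, 'b) monoid_scheme \<Rightarrow> ('g \<Rightarrow> 'g) \<Rightarrow> int \<Rightarrow> 'g \<Rightarrow> 'g" where
  "autpow G \<alpha> k = (if 0 \<le> k then \<alpha> ^^ nat k else (inv_into (carrier G) \<alpha>) ^^ nat (- k))"

definition piV :: "('g, 'b) monoid_scheme \<Rightarrow> ('g \<Rightarrow> 'g \<Rightarrow> 'g) \<Rightarrow> bool list set
    \<Rightarrow> (bool list \<Rightarrow> bool list) \<Rightarrow> (bool list \<Rightarrow> 'g) \<Rightarrow> (bool list \<Rightarrow> 'g)" where
  "piV G \<omega> T f a = (THE b. b \<in> K G \<omega> \<and> (\<forall>t\<in>T. \<forall>u. b (f t @ u) = a (t @ u)))"

definition evalQ :: "('g \<Rightarrow> 'g) \<Rightarrow> (bool list \<Rightarrow> 'g) \<Rightarrow> (nat \<Rightarrow> bool) \<Rightarrow> 'g" where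
  "evalQ \<alpha> a x = (let u = (SOME u. x = conc u zeros) in (\<alpha> ^^ length u) (a u))"

end

theory Submission
  imports Defs
begin

lemma K_D:
  assumes "a \<in> K G (\<lambda>g h. \<alpha> g)"
  shows "a u \<in> carrier G" "a u = \<alpha> (a (u @ [False]))"
  using assms unfolding K_def mem_Collect_eq by blast+

lemma K_zeros:
  assumes "a \<in> K G (\<lambda>g h. \<alpha> g)"
  shows "a u = (\<alpha>^^k) (a (u @ replicate k False))"
proof (induction k)
  case 0 then show ?case by simp
next
  case (Suc k)
  have "a (u @ replicate k False) = \<alpha> (a (u @ replicate k False @ [False]))"
    using K_D(2)[OF assms, of "u @ replicate k False"] by simp
  also have "replicate k False @ [False] = replicate (Suc k) False"
    by (simp add: replicate_append_same)
  finally show ?case using Suc by (simp add: funpow_Suc_right del: funpow.simps)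
qed

lemma conc_zeros_eq:
  assumes "conc u zeros = conc u' zeros" "length u \<le> length u'"
  shows "u' = u @ replicate (length u' - length u) False"
proof (rule nth_equalityI)
  show "length u' = length (u @ replicate (length u' - length u) False)" using assms by simp
  fix i assume i: "i < length u'"
  have "conc u zeros i = conc u' zeros i" using assms by simp
  then show "u' ! i = (u @ replicate (length u' - length u) False) ! i"
    using i by (auto simp: conc_def zeros_def nth_append split: if_splits)
qed

lemma evalQ_aux:
  assumes "a \<in> K G (\<lambda>g h. \<alpha> g)" "conc u zeros = conc u' zeros" "length u \<le> length u'"
  shows "(\<alpha>^^length u) (a u) = (\<alpha>^^length u') (a u')"
proof -
  have "a u = (\<alpha>^^(length u' - length u)) (a u')"
    using K_zeros[OF assms(1)] conc_zeros_eq[OF assms(2,3)] by metis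
  then have "(\<alpha>^^length u) (a u) = (\<alpha>^^(length u + (length u' - length u))) (a u')"
    by (simp add: funpow_add)
  then show ?thesis using assms(3) by simp
qed

lemma evalQ_eq:
  assumes "a \<in> K G (\<lambda>g h. \<alpha> g)" "x = conc u zeros"
  shows "evalQ \<alpha> a x = (\<alpha>^^length u) (a u)"
proof -
  define u0 where "u0 = (SOME u. x = conc u zeros)"
  have u0: "x = conc u0 zeros" unfolding u0_def by (rule someI, rule assms(2))
  have "evalQ \<alpha> a x = (\<alpha>^^length u0) (a u0)" unfolding evalQ_def u0_def Let_def by simp
  also have "\<dots> = (\<alpha>^^length u) (a u)"
    using evalQ_aux[OF assms(1), of u0 u] evalQ_aux[OF assms(1), of u u0] u0 assms(2)
    by (cases "length u0 \<le> length u") auto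
  finally show ?thesis .
qed

lemma funpow_carrier:
  assumes "\<alpha> \<in> iso G G" "g \<in> carrier G"
  shows "(\<alpha>^^n) g \<in> carrier G"
proof -
  have "\<alpha> \<in> carrier G \<rightarrow> carrier G" using assms(1) unfolding iso_def hom_def by auto
  then show ?thesis using assms(2) by (induction n) auto
qed

lemma inv_funpow:
  assumes "\<alpha> \<in> iso G G" "g \<in> carrier G"
  shows "(inv_into (carrier G) \<alpha> ^^ n) ((\<alpha>^^n) g) = g"
proof (induction n)
  case 0 then show ?case by simp
next
  case (Suc n)
  have inj: "inj_on \<alpha> (carrier G)" using assms(1) unfolding iso_def bij_betw_def by auto
  have car: "(\<alpha>^^n) g \<in> carrier G" by (rule funpow_carrier[OF assms])
  have "(inv_into (carrier G) \<alpha> ^^ Suc n) ((\<alpha>^^Suc n) g) = (inv_into (carrier G) \<alpha> ^^ Suc n) (\<alpha> ((\<alpha>^^n) g))" by simp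
  also have "\<dots> = (inv_into (carrier G) \<alpha> ^^ n) (inv_into (carrier G) \<alpha> (\<alpha> ((\<alpha>^^n) g)))"
    by (simp only: funpow_Suc_right comp_def)
  also have "\<dots> = (inv_into (carrier G) \<alpha> ^^ n) ((\<alpha>^^n) g)" using inv_into_f_f[OF inj car] by simp
  finally show ?case using Suc by simp
qed

lemma prefix_split:
  assumes "is_prefix_of s (conc w zeros)"
  shows "w @ replicate (length s) False = s @ drop (length s) (w @ replicate (length s) False)"
proof -
  have "take (length s) (w @ replicate (length s) False) = s"
  proof (rule nth_equalityI)
    show "length (take (length s) (w @ replicate (length s) False)) = length s" by simp
    fix i assume i: "i < length (take (length s) (w @ replicate (length s) False))"
    then have i': "i < length s" by simp
    have "conc w zeros i = s ! i" using assms i' unfolding is_prefix_of_def by auto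
    then show "take (length s) (w @ replicate (length s) False) ! i = s ! i"
      using i' by (auto simp: conc_def zeros_def nth_append)
  qed
  then show ?thesis by (metis append_take_drop_id)
qed

lemma prefix_conc: "is_prefix_of s (conc (s @ u) z)"
  unfolding is_prefix_of_def conc_def by (auto simp: nth_append)

lemma conc_snoc_False: "conc (w @ [False]) zeros = conc w zeros"
  unfolding conc_def zeros_def
  by (rule ext) (auto simp: nth_append)

lemma piV_char:
  assumes iso: "\<alpha> \<in> iso G G" and rep: "is_rep v T S f" and aK: "a \<in> K G (\<lambda>g h. \<alpha> g)"
  shows "piV G (\<lambda>g h. \<alpha> g) T f a \<in> K G (\<lambda>g h. \<alpha> g) \<and>
    (\<forall>t\<in>T. \<forall>u. piV G (\<lambda>g h. \<alpha> g) T f a (f t @ u) = a (t @ u))"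
proof -
  let ?P = "\<lambda>b. b \<in> K G (\<lambda>g h. \<alpha> g) \<and> (\<forall>t\<in>T. \<forall>u. b (f t @ u) = a (t @ u))"
  have cS: "complete_prefix_code S" and bij: "bij_betw f T S"
    using rep unfolding is_rep_def by auto
  have Sex: "\<exists>!s. s \<in> S \<and> is_prefix_of s y" for y using cS unfolding complete_prefix_code_def by auto
  have acar: "a u \<in> carrier G" for u using K_D(1)[OF aK] .
  define sel where "sel w = (THE s. s \<in> S \<and> is_prefix_of s (conc w zeros))" for w
  have sel: "sel w \<in> S \<and> is_prefix_of (sel w) (conc w zeros)" for w
    unfolding sel_def by (rule theI', rule Sex)
  have sel_eq: "sel w = s" if "s \<in> S" "is_prefix_of s (conc w zeros)" for s w
    using Sex sel that by blast
  define b where "b w = (let s = sel w; n = length s in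
     (\<alpha>^^n) (a (inv_into T f s @ drop n (w @ replicate n False))))" for w
  have "?P b"
  proof
    show "b \<in> K G (\<lambda>g h. \<alpha> g)" unfolding K_def
    proof (safe)
      fix w show "b w \<in> carrier G" unfolding b_def Let_def by (rule funpow_carrier[OF iso acar])
    next
      fix w
      have s2: "sel (w @ [False]) = sel w" unfolding sel_def conc_snoc_False ..
      define s where "s = sel w"
      define n where "n = length s"
      define t where "t = inv_into T f s"
      have "a (t @ drop n (w @ replicate n False)) =
         \<alpha> (a (t @ drop n (w @ replicate n False) @ [False]))"
        using K_D(2)[OF aK, of "t @ drop n (w @ replicate n False)"] by simp
      also have "drop n (w @ replicate n False) @ [False] = drop n ((w @ [False]) @ replicate n False)"
        by (simp add: n_def replicate_append_same[symmetric])
      finally have "b w = (\<alpha>^^n) (\<alpha> (a (t @ drop n ((w @ [False]) @ replicate n False))))"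
        unfolding b_def Let_def s_def n_def t_def by simp
      also have "\<dots> = \<alpha> (b (w @ [False]))"
        unfolding b_def Let_def s2 s_def n_def t_def by (simp add: funpow_swap1)
      finally show "b w = \<alpha> (b (w @ [False]))" .
    qed
  next
    show "\<forall>t\<in>T. \<forall>u. b (f t @ u) = a (t @ u)"
    proof (intro ballI allI)
      fix t u assume t: "t \<in> T"
      have ft: "f t \<in> S" using bij t by (auto simp: bij_betw_def)
      have se: "sel (f t @ u) = f t" by (rule sel_eq[OF ft prefix_conc])
      have it: "inv_into T f (f t) = t" using bij t by (simp add: bij_betw_def inv_into_f_f)
      have e: "b (f t @ u) = (\<alpha>^^length (f t)) (a ((t @ u) @ replicate (length (f t)) False))"
        unfolding b_def Let_def se it by simp
      show "b (f t @ u) = a (t @ u)"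
        using e K_zeros[OF aK, of "t @ u" "length (f t)"] by simp
    qed
  qed
  moreover have "b1 = b2" if "?P b1" "?P b2" for b1 b2
  proof
    fix w
    have s: "sel w \<in> S" "is_prefix_of (sel w) (conc w zeros)" using sel by auto
    obtain t where t: "t \<in> T" "sel w = f t" using s(1) bij by (auto simp: bij_betw_def)
    define n where "n = length (sel w)"
    define r where "r = drop n (w @ replicate n False)"
    have wr: "w @ replicate n False = f t @ r" using prefix_split[OF s(2)] t unfolding n_def r_def by simp
    have "b1 w = (\<alpha>^^n) (b1 (w @ replicate n False))" using K_zeros[of b1] that(1) by blast
    also have "\<dots> = (\<alpha>^^n) (a (t @ r))" using wr that(1) t by simp
    also have "\<dots> = (\<alpha>^^n) (b2 (w @ replicate n False))" using wr that(2) t by simp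
    also have "\<dots> = b2 w" using K_zeros[of b2] that(2) by metis
    finally show "b1 w = b2 w" .
  qed
  ultimately have "\<exists>!b. ?P b" by blast
  then show ?thesis unfolding piV_def by (rule theI')
qed

theorem mainTheorem7:
  fixes G :: "('g, 'b) monoid_scheme" and \<alpha> :: "'g \<Rightarrow> 'g"
    and v :: "(nat \<Rightarrow> bool) \<Rightarrow> (nat \<Rightarrow> bool)"
    and T S :: "bool list set" and f :: "bool list \<Rightarrow> bool list"
    and a :: "bool list \<Rightarrow> 'g" and x :: "nat \<Rightarrow> bool"
  assumes "group G" and "\<alpha> \<in> iso G G"
    and "v \<in> thompsonV" and "is_rep v T S f"
    and "a \<in> K G (\<lambda>g h. \<alpha> g)" and "x \<in> Q2"
  shows "log 2 (slope T f (inv_into UNIV v x)) \<in> \<int> \<and>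
    evalQ \<alpha> (piV G (\<lambda>g h. \<alpha> g) T f a) x
      = autpow G \<alpha> (- \<lfloor>log 2 (slope T f (inv_into UNIV v x))\<rfloor>) (evalQ \<alpha> a (inv_into UNIV v x))"
proof -
  note iso = assms(2) and rep = assms(4) and aK = assms(5)
  have cT: "complete_prefix_code T" and bij: "bij_betw f T S"
    using rep unfolding is_rep_def by auto
  obtain w0 where "homeomorphism UNIV UNIV v w0" using assms(3) unfolding thompsonV_def by auto
  then have "v (w0 z) = z" for z unfolding homeomorphism_def by auto
  then have "surj v" by (metis surjI)
  define y where "y = inv_into UNIV v x"
  have vy: "v y = x" unfolding y_def using \<open>surj v\<close> by (simp add: f_inv_into_f)
  obtain u where u: "x = conc u zeros" using assms(6) unfolding Q2_def by auto
  have Tex: "\<exists>!t. t \<in> T \<and> is_prefix_of t y" using cT unfolding complete_prefix_code_def by auto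
  then obtain t where t: "t \<in> T" "is_prefix_of t y" by auto
  have theT: "(THE t. t \<in> T \<and> is_prefix_of t y) = t" using Tex t by (metis (no_types, lifting) the_equality)
  define w where "w = (\<lambda>n. y (n + length t))"
  have yc: "y = conc t w" using t(2) unfolding conc_def w_def is_prefix_of_def by (auto intro!: ext)
  have xc: "x = conc (f t) w" using rep t vy yc unfolding is_rep_def by auto
  define m where "m = length u"
  define w' where "w' = map w [0..<m]"
  have xz: "x n = False" if "n \<ge> m" for n using that u unfolding m_def conc_def zeros_def by auto
  have x2: "x = conc (f t @ w') zeros"
  proof
    fix n show "x n = conc (f t @ w') zeros n"
    proof (cases "n < length (f t) + m")
      case True then show ?thesis unfolding xc w'_def conc_def by (auto simp: nth_append)
    next
      case False then show ?thesis using xz[of n] unfolding w'_def conc_def zeros_def by auto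
    qed
  qed
  have y2: "y = conc (t @ w') zeros"
  proof
    fix n show "y n = conc (t @ w') zeros n"
    proof (cases "n < length t + m")
      case True then show ?thesis unfolding yc w'_def conc_def by (auto simp: nth_append)
    next
      case False
      have "y n = x (n - length t + length (f t))" unfolding yc xc conc_def using False by auto
      also have "\<dots> = False" using xz False by auto
      finally show ?thesis using False unfolding w'_def conc_def zeros_def by auto
    qed
  qed
  have sl: "slope T f y = 2 powr (real (length t) - real (length (f t)))"
    unfolding slope_def theT Let_def ..
  have lg: "log 2 (slope T f y) = real_of_int (int (length t) - int (length (f t)))"
    unfolding sl by simp
  have fl: "\<lfloor>log 2 (slope T f y)\<rfloor> = int (length t) - int (length (f t))"
    unfolding lg by (rule floor_of_int)
  have pc: "piV G (\<lambda>g h. \<alpha> g) T f a \<in> K G (\<lambda>g h. \<alpha> g)"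
    "piV G (\<lambda>g h. \<alpha> g) T f a (f t @ w') = a (t @ w')"
    using piV_char[OF iso rep aK] t by auto
  have e1: "evalQ \<alpha> (piV G (\<lambda>g h. \<alpha> g) T f a) x = (\<alpha>^^(length (f t) + m)) (a (t @ w'))"
    using evalQ_eq[OF pc(1) x2] pc(2) by (simp add: w'_def)
  have e2: "evalQ \<alpha> a y = (\<alpha>^^(length t + m)) (a (t @ w'))"
    using evalQ_eq[OF aK y2] by (simp add: w'_def)
  have gc: "a (t @ w') \<in> carrier G" using K_D(1)[OF aK] .
  have main: "(\<alpha>^^(length (f t) + m)) g = autpow G \<alpha> (- (int (length t) - int (length (f t)))) ((\<alpha>^^(length t + m)) g)"
    if g: "g \<in> carrier G" for g
  proof (cases "length t \<le> length (f t)")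
    case True
    then have "nat (- (int (length t) - int (length (f t)))) = length (f t) - length t" by simp
    moreover have "(\<alpha>^^(length (f t) - length t)) ((\<alpha>^^(length t + m)) g) = (\<alpha>^^((length (f t) - length t) + (length t + m))) g"
      by (simp add: funpow_add)
    moreover have "(length (f t) - length t) + (length t + m) = length (f t) + m" using True by simp
    ultimately show ?thesis using True unfolding autpow_def by simp
  next
    case False
    define k where "k = length t - length (f t)"
    have nk: "nat (- (- (int (length t) - int (length (f t))))) = k" unfolding k_def using False by simp
    have "(\<alpha>^^(length t + m)) g = (\<alpha>^^k) ((\<alpha>^^(length (f t) + m)) g)"
    proof -
      have "(\<alpha>^^k) ((\<alpha>^^(length (f t) + m)) g) = (\<alpha>^^(k + (length (f t) + m))) g"
        by (simp add: funpow_add)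
      moreover have "k + (length (f t) + m) = length t + m" using False unfolding k_def by simp
      ultimately show ?thesis by simp
    qed
    then show ?thesis using False nk inv_funpow[OF iso funpow_carrier[OF iso g]] unfolding autpow_def
      by simp
  qed
  show ?thesis
    unfolding y_def[symmetric] using lg fl e1 e2 main[OF gc] by simp
qed

end
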